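(* Let $A\in H_n$ and $B\in H_m$ have eigenvalues $a_1,\dots,a_n$ and $b_1,\dots,b_m$, respectively, and set $\mathbf a=(a_1,\dots,a_n)$, $\mathbf b=(b_1,\dots,b_m)$. The following are equivalent: (a) there is a trace preserving completely positive map $\Phi:M_n\to M_m$ with $\Phi(A)=B$; (b) there is an $n\times m$ row stochastic matrix $D$ with $\mathbf b=\mathbf aD$; (c) $\mathrm{tr}\,A=\mathrm{tr}\,B$ and $\sum_{p=1}^n|a_p|\ge\sum_{q=1}^m|b_q|$. Moreover, when (b) holds, $D$ can be chosen so that its $p$-th and $q$-th rows are identical whenever $a_pa_q>0$, and for every $p$ with $a_p=0$ the $p$-th row of $D$ may be replaced by an arbitrary nonnegative vector with entries summing to 1 while keeping $\mathbf b=\mathbf aD$. Also, condition (c) is equivalent to: $\mathrm{tr}\,A=\mathrm{tr}\,B$ and the sum of the positive eigenvalues of $A$ is at least the sum of the positive eigenvalues of $B$ (equivalently, the sum of the negative eigenvalues of $A$ is at most the sum of the negative eigenvalues of $B$).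
   Context: $H_n$ is the set of $n\times n$ Hermitian matrices. A linear map $\Phi:M_n\to M_m$ is completely positive if all maps $I_k\otimes\Phi$ preserve positive semidefiniteness, and trace preserving if $\mathrm{tr}\,\Phi(X)=\mathrm{tr}\,X$ for all $X$. A row stochastic matrix is a nonnegative matrix each of whose rows sums to 1. *)

theory Defs
  imports "Jordan_Normal_Form.Char_Poly"
begin

definition mtrace :: "complex mat \<Rightarrow> complex" where
  "mtrace A = (\<Sum>i<dim_row A. A $$ (i,i))"

definition hermitian_mat :: "nat \<Rightarrow> complex mat \<Rightarrow> bool" where
  "hermitian_mat n A \<longleftrightarrow> A \<in> carrier_mat n n \<and>
     (\<forall>i<n. \<forall>j<n. A $$ (j,i) = cnj (A $$ (i,j)))"

definition psd_mat :: "complex mat \<Rightarrow> bool" where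
  "psd_mat A \<longleftrightarrow> hermitian_mat (dim_row A) A \<and>
     (\<forall>x \<in> carrier_vec (dim_row A).
        0 \<le> Re (\<Sum>i<dim_row A. \<Sum>j<dim_row A. cnj (x $ i) * A $$ (i,j) * x $ j))"

definition has_eigenvalues :: "complex mat \<Rightarrow> real list \<Rightarrow> bool" where
  "has_eigenvalues A a \<longleftrightarrow>
     char_poly A = (\<Prod>x\<leftarrow>a. [:- complex_of_real x, 1:])"

definition linear_map_mat :: "nat \<Rightarrow> nat \<Rightarrow> (complex mat \<Rightarrow> complex mat) \<Rightarrow> bool" where
  "linear_map_mat n m \<Phi> \<longleftrightarrow>
     (\<forall>X \<in> carrier_mat n n. \<Phi> X \<in> carrier_mat m m) \<and>
     (\<forall>X \<in> carrier_mat n n. \<forall>Y \<in> carrier_mat n n. \<Phi> (X + Y) = \<Phi> X + \<Phi> Y) \<and>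
     (\<forall>c. \<forall>X \<in> carrier_mat n n. \<Phi> (c \<cdot>\<^sub>m X) = c \<cdot>\<^sub>m \<Phi> X)"

text \<open>The map I_k \<otimes> \<Phi> : M_k(M_n) \<rightarrow> M_k(M_m), applying \<Phi> to each n x n block.\<close>
definition ampl :: "nat \<Rightarrow> nat \<Rightarrow> nat \<Rightarrow> (complex mat \<Rightarrow> complex mat) \<Rightarrow> complex mat \<Rightarrow> complex mat" where
  "ampl k n m \<Phi> X = mat (k * m) (k * m) (\<lambda>(i,j).
      \<Phi> (mat n n (\<lambda>(r,s). X $$ ((i div m) * n + r, (j div m) * n + s))) $$ (i mod m, j mod m))"

definition completely_positive :: "nat \<Rightarrow> nat \<Rightarrow> (complex mat \<Rightarrow> complex mat) \<Rightarrow> bool" where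
  "completely_positive n m \<Phi> \<longleftrightarrow>
     (\<forall>k. \<forall>X \<in> carrier_mat (k * n) (k * n). psd_mat X \<longrightarrow> psd_mat (ampl k n m \<Phi> X))"

definition trace_preserving :: "nat \<Rightarrow> (complex mat \<Rightarrow> complex mat) \<Rightarrow> bool" where
  "trace_preserving n \<Phi> \<longleftrightarrow> (\<forall>X \<in> carrier_mat n n. mtrace (\<Phi> X) = mtrace X)"

definition row_stochastic :: "nat \<Rightarrow> nat \<Rightarrow> real mat \<Rightarrow> bool" where
  "row_stochastic n m D \<longleftrightarrow> D \<in> carrier_mat n m \<and>
     (\<forall>i<n. \<forall>j<m. 0 \<le> D $$ (i,j)) \<and> (\<forall>i<n. (\<Sum>j<m. D $$ (i,j)) = 1)"

definition vec_mat_eq :: "real list \<Rightarrow> real list \<Rightarrow> real mat \<Rightarrow> bool" where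
  "vec_mat_eq b a D \<longleftrightarrow>
     (\<forall>q<length b. b ! q = (\<Sum>p<length a. a ! p * D $$ (p,q)))"

end

theory Submission
  imports Defs "Jordan_Normal_Form.Schur_Decomposition"
begin


lemma mat_adjoint_dim[simp]: "dim_row (mat_adjoint A) = dim_col A" "dim_col (mat_adjoint A) = dim_row A"
  unfolding mat_adjoint_def by auto

lemma mat_adjoint_index[simp]: "i < dim_col A \<Longrightarrow> j < dim_row A \<Longrightarrow>
   mat_adjoint (A :: complex mat) $$ (i,j) = cnj (A $$ (j,i))"
  unfolding mat_adjoint_def by (simp add: mat_of_rows_index)

lemma mat_adjoint_carrier[simp]: "A \<in> carrier_mat n m \<Longrightarrow> mat_adjoint A \<in> carrier_mat m n"
  unfolding carrier_mat_def by auto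

lemma mat_adjoint_mult: assumes "(A::complex mat) \<in> carrier_mat n k" "B \<in> carrier_mat k m"
  shows "mat_adjoint (A*B) = mat_adjoint B * mat_adjoint A"
  apply (rule eq_matI)
  using assms by (auto simp: scalar_prod_def sum_conjugate mult.commute intro!: sum.cong)

lemma mat_adjoint_one_block: assumes "(P::complex mat) \<in> carrier_mat k k"
  shows "mat_adjoint (four_block_mat (1\<^sub>m 1) (0\<^sub>m 1 k) (0\<^sub>m k 1) P)
     = four_block_mat (1\<^sub>m 1) (0\<^sub>m 1 k) (0\<^sub>m k 1) (mat_adjoint P)"
  apply (rule eq_matI)
  using assms by auto

lemma mat_adjoint_one[simp]: "mat_adjoint (1\<^sub>m n :: complex mat) = 1\<^sub>m n"
  by (rule eq_matI) auto

definition nrm :: "complex vec \<Rightarrow> complex vec" where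
  "nrm w = complex_of_real (1 / sqrt (Re (w \<bullet>c w))) \<cdot>\<^sub>v w"

lemma nrm_carrier[simp]: "w \<in> carrier_vec n \<Longrightarrow> nrm w \<in> carrier_vec n"
  unfolding nrm_def by auto

lemma cscalar_smult: assumes "x \<in> carrier_vec n" "y \<in> carrier_vec n"
  shows "(c \<cdot>\<^sub>v x) \<bullet>c (d \<cdot>\<^sub>v (y :: complex vec)) = c * cnj d * (x \<bullet>c y)"
  using assms by (auto simp: scalar_prod_def sum_distrib_left mult_ac intro!: sum.cong)

lemma cscalar_self_real: assumes "w \<in> carrier_vec n" "w \<noteq> 0\<^sub>v n"
  shows "w \<bullet>c (w::complex vec) = complex_of_real (Re (w \<bullet>c w))" "Re (w \<bullet>c w) > 0"
proof -
  have "w \<bullet>c w > 0" using conjugate_square_greater_0_vec assms by blast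
  thus "w \<bullet>c (w::complex vec) = complex_of_real (Re (w \<bullet>c w))" "Re (w \<bullet>c w) > 0"
    by (auto simp: less_complex_def complex_eq_iff)
qed

lemma nrm_orth: assumes ws: "set ws \<subseteq> carrier_vec n" "corthogonal ws"
  and i: "i < length ws" and j: "j < length ws"
  shows "nrm (ws ! i) \<bullet>c nrm (ws ! j) = (if i = j then 1 else 0)"
proof -
  have wi: "ws ! i \<in> carrier_vec n" and wj: "ws ! j \<in> carrier_vec n" using ws i j by auto
  have o: "(ws ! i \<bullet>c ws ! j = 0) = (i \<noteq> j)" using corthogonalD[OF ws(2) i j] .
  show ?thesis
  proof (cases "i = j")
    case True
    have nz: "ws ! i \<noteq> 0\<^sub>v n" using o True wi by auto
    note r = cscalar_self_real[OF wi nz]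
    define r0 where "r0 = Re (ws ! i \<bullet>c ws ! i)"
    have r0: "r0 > 0" using r r0_def by auto
    have "nrm (ws ! i) \<bullet>c nrm (ws ! i) =
       complex_of_real (1 / sqrt r0) * cnj (complex_of_real (1 / sqrt r0)) * complex_of_real r0"
      unfolding nrm_def using cscalar_smult[OF wi wi] r(1) r0_def by metis
    also have "\<dots> = complex_of_real ((1 / sqrt r0) * (1 / sqrt r0) * r0)"
      by (simp only: complex_cnj_complex_of_real of_real_mult)
    also have "(1 / sqrt r0) * (1 / sqrt r0) * r0 = 1" using r0
      by (simp add: divide_simps)
    finally show ?thesis using True by simp
  next
    case False
    thus ?thesis unfolding nrm_def using cscalar_smult[OF wi wj] o by simp
  qed
qed

lemma unitary_schur:
  assumes A: "(A::complex mat) \<in> carrier_mat n n"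
      and c: "char_poly A = (\<Prod> (e :: complex) \<leftarrow> es. [:- e, 1:])"
  shows "\<exists>B P. similar_mat_wit A B P (mat_adjoint P) \<and> upper_triangular B \<and> diag_mat B = es"
  using assms
proof (induct es arbitrary: n A)
  case Nil
  with degree_monic_char_poly[of A n] have n: "n = 0" by auto
  show ?case
    apply (rule exI[of _ A], rule exI[of _ "1\<^sub>m n"])
    using Nil n by (auto intro: similar_mat_wit_refl simp: diag_mat_def upper_triangular_def)
next
  case (Cons e es n A)
  let ?n1 = "n - 1"
  from Cons have A: "A \<in> carrier_mat n n" and dim: "dim_row A = n" by auto
  let ?cp = "char_poly A"
  from Cons(3)
  have cp: "?cp = [: -e, 1 :] * (\<Prod>e \<leftarrow> es. [:- e, 1:])" by auto
  have mon: "monic (\<Prod>e\<leftarrow> es. [:- e, 1:])" by (rule monic_prod_list, auto)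
  have deg: "degree ?cp = Suc (degree (\<Prod>e\<leftarrow> es. [:- e, 1:]))" unfolding cp
    by (subst degree_mult_eq, insert mon, auto)
  with degree_monic_char_poly[OF A] have n: "n \<noteq> 0" by auto
  define v where "v = find_eigenvector A e"
  define b where "b = basis_completion v"
  define ws where "ws = gram_schmidt n b"
  define us where "us = map nrm ws"
  define W where "W = mat_of_cols n us"
  define W' where "W' = mat_adjoint W"
  define A' where "A' = W' * A * W"
  have e: "eigenvalue A e" 
    unfolding eigenvalue_root_char_poly[OF A] cp by simp
  from find_eigenvector[OF A e] have ev: "eigenvector A v e" unfolding v_def .
  from this[unfolded eigenvector_def]
  have v[simp]: "v \<in> carrier_vec n" and v0: "v \<noteq> 0\<^sub>v n" using A by auto
  interpret cof_vec_space n "TYPE(complex)" .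
  from basis_completion[OF v v0, folded b_def]
  have span_b: "span (set b) = carrier_vec n" and dist_b: "distinct b" 
    and indep: "\<not> lin_dep (set b)" and b: "set b \<subseteq> carrier_vec n" and hdb: "hd b = v" 
    and len_b: "length b = n" by auto
  from hdb len_b n obtain vs where bv: "b = v # vs" by (cases b, auto)
  from gram_schmidt_result[OF b dist_b indep refl, folded ws_def]
  have ws: "set ws \<subseteq> carrier_vec n" "corthogonal ws" "length ws = n" 
    by (auto simp: len_b)
  from gram_schmidt_hd[OF v, of vs, folded bv] have hdws: "hd ws = v" unfolding ws_def .
  have us: "set us \<subseteq> carrier_vec n" "length us = n" using ws unfolding us_def by auto
  have usi: "\<And>i. i < n \<Longrightarrow> us ! i \<in> carrier_vec n" using us by auto
  have us0: "us ! 0 = nrm v" using hdws n ws unfolding us_def by (cases ws, auto)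
  have orth: "\<And>i j. i < n \<Longrightarrow> j < n \<Longrightarrow> us ! i \<bullet>c us ! j = (if i = j then 1 else 0)"
    unfolding us_def using nrm_orth[OF ws(1,2)] ws(3) by auto
  have W: "W \<in> carrier_mat n n" unfolding W_def using us by auto
  have W': "W' \<in> carrier_mat n n" unfolding W'_def using W by auto
  have W'W: "W' * W = 1\<^sub>m n"
  proof (rule eq_matI)
    fix i j assume ij: "i < dim_row (1\<^sub>m n :: complex mat)" "j < dim_col (1\<^sub>m n :: complex mat)"
    hence i: "i < n" and j: "j < n" by auto
    have "(W' * W) $$ (i,j) = (\<Sum>k<n. cnj (us ! i $ k) * us ! j $ k)"
      using W W' i j usi[OF i] usi[OF j] unfolding W'_def W_def
      by (auto simp: scalar_prod_def mat_of_cols_index lessThan_atLeast0 intro!: sum.cong)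
    also have "\<dots> = us ! j \<bullet>c us ! i"
      using usi[OF i] usi[OF j] by (auto simp: scalar_prod_def lessThan_atLeast0 mult.commute intro!: sum.cong)
    also have "\<dots> = 1\<^sub>m n $$ (i,j)" using orth[OF j i] i j by auto
    finally show "(W' * W) $$ (i,j) = 1\<^sub>m n $$ (i,j)" .
  qed (insert W W', auto)
  hence WW': "W * W' = 1\<^sub>m n" using mat_mult_left_right_inverse[OF W' W] by auto
  have A': "A' \<in> carrier_mat n n" using W W' A unfolding A'_def by auto
  have A'A_wit: "similar_mat_wit A' A W' W"
    by (rule similar_mat_witI[of _ _ n], insert W W' A A' W'W WW', auto simp: A'_def)
  hence A'A: "similar_mat A' A" unfolding similar_mat_def by blast
  from similar_mat_wit_sym[OF A'A_wit] have simAA': "similar_mat_wit A A' W W'" by auto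
  have eigen: "A *\<^sub>v v = e \<cdot>\<^sub>v v" using ev unfolding eigenvector_def by auto
  have eigen': "A *\<^sub>v (us ! 0) = e \<cdot>\<^sub>v (us ! 0)" unfolding us0 nrm_def
    using eigen A by (simp add: mult_mat_vec smult_smult_assoc mult.commute)
  let ?f = "(\<lambda> i. if i = 0 then e else 0)"
  have col0: "col A' 0 = vec n ?f"
  proof (rule eq_vecI)
    fix i assume "i < dim_vec (vec n ?f)"
    hence i: "i < n" by auto
    have "col A' 0 $ i = A' $$ (i,0)" using A' i n by auto
    also have "\<dots> = (W' * (A * W)) $$ (i,0)" unfolding A'_def using W' A W by auto
    also have "\<dots> = row W' i \<bullet> col (A * W) 0" using W W' A i n by auto
    also have "col (A * W) 0 = A *\<^sub>v col W 0" using A W n by auto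
    also have "col W 0 = us ! 0" unfolding W_def using n us col_mat_of_cols usi by auto
    also have "A *\<^sub>v (us ! 0) = e \<cdot>\<^sub>v (us ! 0)" by (rule eigen')
    also have "row W' i \<bullet> (e \<cdot>\<^sub>v (us ! 0)) = e * (us ! 0 \<bullet>c us ! i)"
      using i n usi[OF i] usi[of 0] W unfolding W'_def W_def
      by (auto simp: scalar_prod_def sum_distrib_left mat_of_cols_index mult_ac intro!: sum.cong)
    also have "\<dots> = ?f i" using orth[of 0 i] i n by auto
    finally show "col A' 0 $ i = vec n ?f $ i" using i by simp
  qed (insert A', auto)
  from A' n have "dim_row A' = 1 + ?n1" "dim_col A' = 1 + ?n1" by auto
  obtain A1 A2 A0 A3 where splitA': "split_block A' 1 1 = (A1,A2,A0,A3)"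
    by (cases "split_block A' 1 1", auto)
  from split_block[OF splitA' \<open>dim_row A' = 1 + ?n1\<close> \<open>dim_col A' = 1 + ?n1\<close>] have A2: "A2 \<in> carrier_mat 1 ?n1"
    and A3: "A3 \<in> carrier_mat ?n1 ?n1" 
    and A'block: "A' = four_block_mat A1 A2 A0 A3" by auto
  have A1id: "A1 = mat 1 1 (\<lambda> _. e)"
    using splitA'[unfolded split_block_def Let_def] arg_cong[OF col0, of "\<lambda> v. v $ 0"] A' n
    by (auto simp: col_def)
  have A1: "A1 \<in> carrier_mat 1 1" unfolding A1id by auto
  {
    fix i
    assume "i < ?n1"
    with arg_cong[OF col0, of "\<lambda> v. v $ Suc i"] A'
    have "A' $$ (Suc i, 0) = 0" by auto
  } note A'0 = this
  have A0id: "A0 = 0\<^sub>m ?n1 1"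
    using splitA'[unfolded split_block_def Let_def] A'0 A' by auto
  have A0: "A0 \<in> carrier_mat ?n1 1" unfolding A0id by auto
  from cp char_poly_similar[OF A'A]
  have cp: "char_poly A' = [: -e,1 :] * (\<Prod> e \<leftarrow> es. [:- e, 1:])" by simp
  also have "char_poly A' = char_poly A1 * char_poly A3" 
    unfolding A'block A0id
    by (rule char_poly_four_block_zeros_col[OF A1 A2 A3])
  also have "char_poly A1 = [: -e,1 :]"
    by (simp add: A1id char_poly_defs det_def sign_def)
  finally have cp: "char_poly A3 = (\<Prod> e \<leftarrow> es. [:- e, 1:])"
    by (metis mult_cancel_left pCons_eq_0_iff zero_neq_one)
  from Cons(1)[OF A3 cp] obtain B P' where simIH: "similar_mat_wit A3 B P' (mat_adjoint P')"
    and ut: "upper_triangular B" and diag: "diag_mat B = es" by auto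
  define Q' where "Q' = mat_adjoint P'"
  from similar_mat_witD2[OF A3 simIH, folded Q'_def] 
  have B: "B \<in> carrier_mat ?n1 ?n1" and P': "P' \<in> carrier_mat ?n1 ?n1" and Q': "Q' \<in> carrier_mat ?n1 ?n1" 
    and PQ': "P' * Q' = 1\<^sub>m ?n1" by auto
  let ?P' = "four_block_mat (1\<^sub>m 1) (0\<^sub>m 1 ?n1) (0\<^sub>m ?n1 1) P'"
  let ?Q' = "four_block_mat (1\<^sub>m 1) (0\<^sub>m 1 ?n1) (0\<^sub>m ?n1 1) Q'"
  define C where "C = four_block_mat A1 (A2 * P') A0 B"
  have A0_eq: "A0 = P' * A0 * 1\<^sub>m 1" unfolding A0id using P' by auto
  have simA'C: "similar_mat_wit A' C ?P' ?Q'" unfolding A'block C_def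
    by (rule similar_mat_wit_four_block[OF similar_mat_wit_refl[OF A1] simIH[folded Q'_def] _ A0_eq A1 A3 A0],
    insert PQ' A2 P' Q', auto)
  have ut1: "upper_triangular A1" unfolding A1id by auto
  have ut: "upper_triangular C" unfolding C_def A0id
    by (intro upper_triangular_four_block[OF _ B ut1 ut], auto simp: A1id)
  from A1id have diagA1: "diag_mat A1 = [e]" unfolding diag_mat_def by auto
  from diag_four_block_mat[OF A1 B] have diag: "diag_mat C = e # es" unfolding diag diagA1 C_def by simp
  have P'c: "?P' \<in> carrier_mat n n" using P' n by (auto simp del: four_block_carrier_mat intro!: four_block_carrier_mat[of _ 1 1 _ ?n1 ?n1, simplified])
  have adj: "mat_adjoint (W * ?P') = ?Q' * W'"
    unfolding W'_def Q'_def
    by (subst mat_adjoint_mult[OF W P'c], subst mat_adjoint_one_block[OF P'], simp)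
  from ut similar_mat_wit_trans[OF simAA' simA'C] diag adj
  show ?case by metis
qed


lemma mat_adjoint_adjoint[simp]: "mat_adjoint (mat_adjoint (A::complex mat)) = A"
  by (rule eq_matI) auto

lemma hermitian_adjoint: assumes "hermitian_mat n A" shows "mat_adjoint A = A"
proof -
  have A: "A \<in> carrier_mat n n" and h: "\<And>i j. i < n \<Longrightarrow> j < n \<Longrightarrow> A $$ (j,i) = cnj (A $$ (i,j))"
    using assms unfolding hermitian_mat_def by blast+
  show ?thesis
  proof (rule eq_matI)
    fix i j assume "i < dim_row A" "j < dim_col A"
    hence ij: "i < n" "j < n" using A by auto
    hence "mat_adjoint A $$ (i,j) = cnj (A $$ (j,i))" using A by simp
    also have "\<dots> = A $$ (i,j)" using h[OF ij(2) ij(1)] by simp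
    finally show "mat_adjoint A $$ (i,j) = A $$ (i,j)" .
  qed (insert A, auto)
qed

lemma spectral_entry:
  assumes herm: "hermitian_mat n A"
    and cp: "char_poly A = (\<Prod>x\<leftarrow>a. [:- complex_of_real x, 1:])"
  shows "\<exists>U \<in> carrier_mat n n.
     (\<forall>p<n. \<forall>q<n. (\<Sum>t<n. cnj (U$$(t,p)) * U$$(t,q)) = (if p = q then 1 else 0)) \<and>
     (\<forall>t<n. \<forall>s<n. (\<Sum>p<n. U$$(t,p) * cnj (U$$(s,p))) = (if t = s then 1 else 0)) \<and>
     (\<forall>t<n. \<forall>s<n. A$$(t,s) = (\<Sum>p<n. U$$(t,p) * complex_of_real (a!p) * cnj (U$$(s,p))))"
proof -
  have A: "A \<in> carrier_mat n n" using herm unfolding hermitian_mat_def by blast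
  define es where "es = map complex_of_real a"
  have cp': "char_poly A = (\<Prod>e\<leftarrow>es. [:- e, 1:])" unfolding cp es_def by (simp add: o_def)
  from unitary_schur[OF A cp'] obtain B P where sim: "similar_mat_wit A B P (mat_adjoint P)"
    and ut: "upper_triangular B" and dg: "diag_mat B = es" by auto
  from similar_mat_witD2[OF A sim] have PQ: "P * mat_adjoint P = 1\<^sub>m n" and QP: "mat_adjoint P * P = 1\<^sub>m n"
    and AB: "A = P * B * mat_adjoint P" and B: "B \<in> carrier_mat n n" and P: "P \<in> carrier_mat n n" by blast+
  have Q: "mat_adjoint P \<in> carrier_mat n n" using P by auto
  have BA: "B = mat_adjoint P * A * P"
    using similar_mat_witD2(3)[OF B similar_mat_wit_sym[OF sim]] .
  have QA: "mat_adjoint P * A \<in> carrier_mat n n" using Q A by auto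
  have "mat_adjoint B = mat_adjoint P * mat_adjoint (mat_adjoint P * A)"
    unfolding BA by (rule mat_adjoint_mult[OF QA P])
  also have "mat_adjoint (mat_adjoint P * A) = mat_adjoint A * mat_adjoint (mat_adjoint P)"
    by (rule mat_adjoint_mult[OF Q A])
  also have "\<dots> = A * P" using hermitian_adjoint[OF herm] by simp
  also have "mat_adjoint P * (A * P) = B" unfolding BA using assoc_mult_mat[OF Q A P] by simp
  finally have Bh: "mat_adjoint B = B" .
  have len: "length es = n" using dg B unfolding diag_mat_def by auto
  have Bd: "\<And>i j. i < n \<Longrightarrow> j < n \<Longrightarrow> B $$ (i,j) = (if i = j then es ! i else 0)"
  proof -
    fix i j assume i: "i < n" and j: "j < n"
    show "B $$ (i,j) = (if i = j then es ! i else 0)"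
    proof (cases "i = j")
      case True thus ?thesis using dg i B unfolding diag_mat_def by auto
    next
      case False
      show ?thesis
      proof (cases "j < i")
        case True thus ?thesis using ut i B False by auto
      next
        case ji: False
        hence "B $$ (j,i) = 0" using ut j B False by auto
        moreover have "B $$ (i,j) = cnj (B $$ (j,i))"
          using arg_cong[OF Bh, of "\<lambda>M. M $$ (i,j)"] i j B by auto
        ultimately show ?thesis using False by auto
      qed
    qed
  qed
  show ?thesis
  proof (intro bexI[OF _ P] conjI allI impI)
    fix p q assume p: "p < n" and q: "q < n"
    have "(mat_adjoint P * P) $$ (p,q) = (\<Sum>t<n. cnj (P$$(t,p)) * P$$(t,q))"
      using P p q by (auto simp: scalar_prod_def lessThan_atLeast0 intro!: sum.cong)
    thus "(\<Sum>t<n. cnj (P$$(t,p)) * P$$(t,q)) = (if p = q then 1 else 0)" unfolding QP using p q by auto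
  next
    fix t s assume t: "t < n" and s: "s < n"
    have "(P * mat_adjoint P) $$ (t,s) = (\<Sum>p<n. P$$(t,p) * cnj (P$$(s,p)))"
      using P t s by (auto simp: scalar_prod_def lessThan_atLeast0 intro!: sum.cong)
    thus "(\<Sum>p<n. P$$(t,p) * cnj (P$$(s,p))) = (if t = s then 1 else 0)" unfolding PQ using t s by auto
  next
    fix t s assume t: "t < n" and s: "s < n"
    have PB: "\<And>p. p < n \<Longrightarrow> (P * B) $$ (t,p) = P $$ (t,p) * es ! p"
    proof -
      fix p assume p: "p < n"
      have "(P * B) $$ (t,p) = (\<Sum>k<n. P $$ (t,k) * B $$ (k,p))"
        using P B t p by (auto simp: scalar_prod_def lessThan_atLeast0 intro!: sum.cong)
      also have "\<dots> = (\<Sum>k<n. if k = p then P $$ (t,p) * es ! p else 0)"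
        by (rule sum.cong, auto simp: Bd p)
      finally show "(P * B) $$ (t,p) = P $$ (t,p) * es ! p" using p by simp
    qed
    have "A $$ (t,s) = (\<Sum>p<n. (P * B) $$ (t,p) * cnj (P$$(s,p)))"
      unfolding AB using P B t s by (auto simp: scalar_prod_def lessThan_atLeast0 intro!: sum.cong)
    also have "\<dots> = (\<Sum>p<n. P$$(t,p) * complex_of_real (a!p) * cnj (P$$(s,p)))"
      using len unfolding es_def by (intro sum.cong, auto simp: PB[unfolded es_def])
    finally show "A$$(t,s) = (\<Sum>p<n. P$$(t,p) * complex_of_real (a!p) * cnj (P$$(s,p)))" .
  qed
qed




lemma sum_list_idx: "sum_list (map f xs) = (\<Sum>p<length xs. f (xs!p))"
  by (simp add: sum_list_sum_nth lessThan_atLeast0)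

lemma sum_list_idx': "sum_list xs = (\<Sum>p<length xs. xs!p)"
  by (simp add: sum_list_sum_nth lessThan_atLeast0)

lemma sum_list_filter_map: "sum_list (filter P xs) = sum_list (map (\<lambda>x. if P x then x else (0::real)) xs)"
  by (induct xs) auto

lemma b_to_c:
  assumes rs: "row_stochastic n m D" and v: "vec_mat_eq b a D" and la: "length a = n" and lb: "length b = m"
  shows "sum_list b = sum_list a" "sum_list (map abs b) \<le> sum_list (map abs a)"
proof -
  have nn: "\<And>p q. p < n \<Longrightarrow> q < m \<Longrightarrow> 0 \<le> D $$ (p,q)" and rsum: "\<And>p. p < n \<Longrightarrow> (\<Sum>q<m. D $$ (p,q)) = 1"
    using rs unfolding row_stochastic_def by auto
  have bq: "\<And>q. q < m \<Longrightarrow> b ! q = (\<Sum>p<n. a ! p * D $$ (p,q))" using v la lb unfolding vec_mat_eq_def by auto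
  have "sum_list b = (\<Sum>q<m. \<Sum>p<n. a ! p * D $$ (p,q))" unfolding sum_list_idx' lb using bq by simp
  also have "\<dots> = (\<Sum>p<n. a ! p * (\<Sum>q<m. D $$ (p,q)))" by (simp add: sum.swap[of _ "{..<m}"] sum_distrib_left)
  also have "\<dots> = (\<Sum>p<n. a ! p)" using rsum by simp
  finally show "sum_list b = sum_list a" unfolding sum_list_idx'[of a] la .
  have "sum_list (map abs b) = (\<Sum>q<m. \<bar>\<Sum>p<n. a ! p * D $$ (p,q)\<bar>)" unfolding sum_list_idx lb using bq by simp
  also have "\<dots> \<le> (\<Sum>q<m. \<Sum>p<n. \<bar>a ! p\<bar> * D $$ (p,q))"
    by (intro sum_mono order.trans[OF sum_abs], auto simp: abs_mult nn)
  also have "\<dots> = (\<Sum>p<n. \<bar>a ! p\<bar> * (\<Sum>q<m. D $$ (p,q)))" by (simp add: sum.swap[of _ "{..<m}"] sum_distrib_left)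
  also have "\<dots> = (\<Sum>p<n. \<bar>a ! p\<bar>)" using rsum by simp
  finally show "sum_list (map abs b) \<le> sum_list (map abs a)" unfolding sum_list_idx[of _ a] la .
qed

lemma c_to_b:
  assumes la: "length a = n" and lb: "length b = m" and m: "m \<ge> 1"
    and s: "sum_list a = sum_list b" and ab: "sum_list (map abs b) \<le> sum_list (map abs a)"
  shows "\<exists>D. row_stochastic n m D \<and> vec_mat_eq b a D \<and> (\<forall>p<n. \<forall>q<n. a ! p * a ! q > 0 \<longrightarrow> row D p = row D q)"
proof -
  define ap where "ap = (\<Sum>p<n. max (a!p) 0)"
  define an where "an = (\<Sum>p<n. max (-(a!p)) 0)"
  define bp where "bp = (\<Sum>q<m. max (b!q) 0)"
  define bn where "bn = (\<Sum>q<m. max (-(b!q)) 0)"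
  have ap0: "ap \<ge> 0" "an \<ge> 0" "bp \<ge> 0" "bn \<ge> 0" unfolding ap_def an_def bp_def bn_def by (auto intro: sum_nonneg)
  have "sum_list a = ap - an" unfolding sum_list_idx' la ap_def an_def sum_subtractf[symmetric]
    by (intro sum.cong, auto)
  moreover have "sum_list b = bp - bn" unfolding sum_list_idx' lb bp_def bn_def sum_subtractf[symmetric]
    by (intro sum.cong, auto)
  moreover have "sum_list (map abs a) = ap + an" unfolding sum_list_idx la ap_def an_def sum.distrib[symmetric]
    by (intro sum.cong, auto)
  moreover have "sum_list (map abs b) = bp + bn" unfolding sum_list_idx lb bp_def bn_def sum.distrib[symmetric]
    by (intro sum.cong, auto)
  ultimately have e1: "ap - an = bp - bn" and e2: "bp + bn \<le> ap + an" using s ab by auto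
  define t where "t = ap - bp"
  have t0: "t \<ge> 0" and t2: "an - bn = t" using e1 e2 unfolding t_def by auto
  define d where "d = (\<lambda>q::nat. if q = 0 then (1::real) else 0)"
  have sd: "(\<Sum>q<m. d q) = 1" unfolding d_def using m by (simp add: sum.delta)
  define x where "x = (\<lambda>q. if ap = 0 then d q else (max (b!q) 0 + t * d q) / ap)"
  define y where "y = (\<lambda>q. if an = 0 then d q else (max (-(b!q)) 0 + t * d q) / an)"
  define D where "D = mat n m (\<lambda>(p,q). if a!p > 0 then x q else if a!p < 0 then y q else d q)"
  have d0: "\<And>q. d q \<ge> 0" unfolding d_def by auto
  have x0: "\<And>q. x q \<ge> 0" unfolding x_def using ap0 t0 d0 by (auto intro!: divide_nonneg_nonneg add_nonneg_nonneg mult_nonneg_nonneg)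
  have y0: "\<And>q. y q \<ge> 0" unfolding y_def using ap0 t0 d0 by (auto intro!: divide_nonneg_nonneg add_nonneg_nonneg mult_nonneg_nonneg)
  have xs: "(\<Sum>q<m. x q) = 1"
  proof (cases "ap = 0")
    case True thus ?thesis unfolding x_def using sd by simp
  next
    case False
    have "(\<Sum>q<m. x q) = (\<Sum>q<m. max (b!q) 0 + t * d q) / ap" unfolding x_def using False by (simp add: sum_divide_distrib add_divide_distrib sum.distrib)
    also have "\<dots> = (bp + t) / ap" unfolding sum.distrib bp_def sum_distrib_left[symmetric] sd by simp
    finally show ?thesis using False unfolding t_def by simp
  qed
  have ys: "(\<Sum>q<m. y q) = 1"
  proof (cases "an = 0")
    case True thus ?thesis unfolding y_def using sd by simp
  next
    case False
    have "(\<Sum>q<m. y q) = (\<Sum>q<m. max (-(b!q)) 0 + t * d q) / an" unfolding y_def using False by (simp add: sum_divide_distrib add_divide_distrib sum.distrib)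
    also have "\<dots> = (bn + t) / an" unfolding sum.distrib bn_def sum_distrib_left[symmetric] sd by simp
    finally show ?thesis using False t2 by simp
  qed
  have apx: "\<And>q. q < m \<Longrightarrow> ap * x q = max (b!q) 0 + t * d q"
  proof -
    fix q assume q: "q < m"
    show "ap * x q = max (b!q) 0 + t * d q"
    proof (cases "ap = 0")
      case True
      hence "t = 0" "bp = 0" using t0 ap0 unfolding t_def by auto
      hence "max (b!q) 0 = 0" using q unfolding bp_def by (subst (asm) sum_nonneg_eq_0_iff, auto)
      thus ?thesis using True \<open>t = 0\<close> by simp
    next
      case False thus ?thesis unfolding x_def by simp
    qed
  qed
  have any: "\<And>q. q < m \<Longrightarrow> an * y q = max (-(b!q)) 0 + t * d q"
  proof -
    fix q assume q: "q < m"
    show "an * y q = max (-(b!q)) 0 + t * d q"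
    proof (cases "an = 0")
      case True
      hence "t = 0" "bn = 0" using t0 ap0 t2 by auto
      hence "max (-(b!q)) 0 = 0" using q unfolding bn_def by (subst (asm) sum_nonneg_eq_0_iff, auto)
      thus ?thesis using True \<open>t = 0\<close> by simp
    next
      case False thus ?thesis unfolding y_def by simp
    qed
  qed
  show ?thesis
  proof (intro exI[of _ D] conjI allI impI)
    show "row_stochastic n m D" unfolding row_stochastic_def
    proof (intro conjI allI impI)
      show "D \<in> carrier_mat n m" unfolding D_def by auto
      fix i assume i: "i < n"
      show "(\<Sum>j<m. D $$ (i, j)) = 1" using xs ys sd i unfolding D_def
        by (cases "a!i > 0"; cases "a!i < 0"; simp)
      fix j assume "j < m"
      thus "0 \<le> D $$ (i,j)" using i x0 y0 d0 unfolding D_def by auto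
    qed
    show "vec_mat_eq b a D" unfolding vec_mat_eq_def
    proof (intro allI impI)
      fix q assume "q < length b"
      hence q: "q < m" using lb by auto
      have "(\<Sum>p<length a. a ! p * D $$ (p, q)) = (\<Sum>p<n. max (a!p) 0 * x q - max (-(a!p)) 0 * y q)"
        unfolding la D_def using q by (intro sum.cong, auto)
      also have "\<dots> = ap * x q - an * y q" unfolding sum_subtractf ap_def an_def sum_distrib_right by simp
      also have "\<dots> = b ! q" using apx[OF q] any[OF q] by auto
      finally show "b ! q = (\<Sum>p<length a. a ! p * D $$ (p, q))" by simp
    qed
    fix p q assume p: "p < n" and q: "q < n" and pq: "a ! p * a ! q > 0"
    hence "(a!p > 0 \<and> a!q > 0) \<or> (a!p < 0 \<and> a!q < 0)" by (auto simp: zero_less_mult_iff)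
    thus "row D p = row D q" unfolding D_def using p q by (intro eq_vecI, auto)
  qed
qed

lemma replace_row:
  assumes v: "vec_mat_eq b a D" and la: "length a = n" and p: "a ! p = 0" and lb: "length b = m"
  shows "vec_mat_eq b a (mat n m (\<lambda>(i,j). if i = p then r $ j else D $$ (i,j)))"
  unfolding vec_mat_eq_def
proof (intro allI impI)
  fix q assume q: "q < length b"
  have "b ! q = (\<Sum>i<n. a ! i * D $$ (i,q))" using v q la unfolding vec_mat_eq_def by auto
  also have "\<dots> = (\<Sum>i<n. a ! i * mat n m (\<lambda>(i,j). if i = p then r $ j else D $$ (i,j)) $$ (i,q))"
    using q p lb by (intro sum.cong, auto)
  finally show "b ! q = (\<Sum>i<length a. a ! i * mat n m (\<lambda>(i,j). if i = p then r $ j else D $$ (i,j)) $$ (i,q))"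
    unfolding la .
qed




lemma swap3: "(\<Sum>t\<in>A. \<Sum>s\<in>B. \<Sum>k\<in>C. f t s k) = (\<Sum>k\<in>C. \<Sum>t\<in>A. \<Sum>s\<in>B. f t s k)"
proof -
  have "(\<Sum>t\<in>A. \<Sum>s\<in>B. \<Sum>k\<in>C. f t s k) = (\<Sum>t\<in>A. \<Sum>k\<in>C. \<Sum>s\<in>B. f t s k)"
    by (rule sum.cong[OF refl], rule sum.swap)
  also have "\<dots> = (\<Sum>k\<in>C. \<Sum>t\<in>A. \<Sum>s\<in>B. f t s k)" by (rule sum.swap)
  finally show ?thesis .
qed

lemma sum_group: fixes k m :: nat shows "(\<Sum>i<k*m. F i) = (\<Sum>I<k. \<Sum>r<m. F (I*m + r))"
proof -
  have "(\<Sum>i<k*m. F i) = (\<Sum>I<k. sum F {I*m..<I*m+m})" using sum.nat_group[of F m k] by simp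
  also have "\<dots> = (\<Sum>I<k. \<Sum>r<m. F (I*m + r))"
  proof (rule sum.cong[OF refl])
    fix I
    show "sum F {I*m..<I*m+m} = (\<Sum>r<m. F (I*m + r))"
    proof -
      have "{I*m..<I*m+m} = {0 + I*m..<m + I*m}" by (simp add: add.commute)
      hence "sum F {I*m..<I*m+m} = (\<Sum>i\<in>{0..<m}. F (i + I*m))"
        using sum.shift_bounds_nat_ivl[of F 0 "I*m" m] by simp
      also have "\<dots> = (\<Sum>r<m. F (I*m + r))" unfolding lessThan_atLeast0
        by (rule sum.cong[OF refl], simp only: add.commute)
      finally show ?thesis .
    qed
  qed
  finally show ?thesis .
qed

lemma prod_sums: fixes c :: "'a::comm_semiring_1" shows "c * ((\<Sum>t\<in>A. f t) * (\<Sum>s\<in>B. g s)) = (\<Sum>t\<in>A. \<Sum>s\<in>B. c * (f t * g s))"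
  unfolding sum_product by (simp only: sum_distrib_left)

lemma sum_delta_mult: fixes r m :: nat shows "r < m \<Longrightarrow> (\<Sum>s<m. f s * (if s = r then 1 else 0)) = (f r :: 'a::semiring_1)"
  by (subst sum.cong[OF refl, of _ _ "\<lambda>s. if s = r then f r else 0"], auto simp: sum.delta)

definition sd :: "nat \<Rightarrow> complex mat \<Rightarrow> complex mat \<Rightarrow> real list \<Rightarrow> bool" where
  "sd n A U a \<longleftrightarrow> A \<in> carrier_mat n n \<and> U \<in> carrier_mat n n \<and> length a = n \<and>
     (\<forall>p<n. \<forall>q<n. (\<Sum>t<n. cnj (U$$(t,p)) * U$$(t,q)) = (if p = q then 1 else 0)) \<and>
     (\<forall>t<n. \<forall>s<n. (\<Sum>p<n. U$$(t,p) * cnj (U$$(s,p))) = (if t = s then 1 else 0)) \<and>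
     (\<forall>t<n. \<forall>s<n. A$$(t,s) = (\<Sum>p<n. U$$(t,p) * complex_of_real (a!p) * cnj (U$$(s,p))))"

lemma sd_exists: assumes "hermitian_mat n A" "has_eigenvalues A a" "length a = n"
  shows "\<exists>U. sd n A U a"
proof -
  have A: "A \<in> carrier_mat n n" using assms(1) unfolding hermitian_mat_def by blast
  obtain U where U: "U \<in> carrier_mat n n" and
     h1: "\<forall>p<n. \<forall>q<n. (\<Sum>t<n. cnj (U$$(t,p)) * U$$(t,q)) = (if p = q then 1 else 0)" and
     h2: "\<forall>t<n. \<forall>s<n. (\<Sum>p<n. U$$(t,p) * cnj (U$$(s,p))) = (if t = s then 1 else 0)" and
     h3: "\<forall>t<n. \<forall>s<n. A$$(t,s) = (\<Sum>p<n. U$$(t,p) * complex_of_real (a!p) * cnj (U$$(s,p)))"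
    using spectral_entry[OF assms(1) assms(2)[unfolded has_eigenvalues_def]] by blast
  show ?thesis
    unfolding sd_def using A U h1 h2 h3 assms(3) by blast
qed

lemma sd_diag: assumes sd: "sd n A U a" and p: "p < n" and q: "q < n"
  shows "(\<Sum>t<n. \<Sum>s<n. cnj (U$$(t,p)) * A$$(t,s) * U$$(s,q)) = (if p = q then complex_of_real (a!p) else 0)"
proof -
  have U1: "\<And>p q. p < n \<Longrightarrow> q < n \<Longrightarrow> (\<Sum>t<n. cnj (U$$(t,p)) * U$$(t,q)) = (if p = q then 1 else 0)"
    and UA: "\<And>t s. t < n \<Longrightarrow> s < n \<Longrightarrow> A$$(t,s) = (\<Sum>k<n. U$$(t,k) * complex_of_real (a!k) * cnj (U$$(s,k)))"
    using sd unfolding sd_def by auto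
  have "(\<Sum>t<n. \<Sum>s<n. cnj (U$$(t,p)) * A$$(t,s) * U$$(s,q))
      = (\<Sum>t<n. \<Sum>s<n. \<Sum>k<n. complex_of_real (a!k) * ((cnj (U$$(t,p)) * U$$(t,k)) * (cnj (U$$(s,k)) * U$$(s,q))))"
    by (intro sum.cong refl, simp add: UA sum_distrib_left sum_distrib_right mult_ac)
  also have "\<dots> = (\<Sum>k<n. complex_of_real (a!k) * ((\<Sum>t<n. cnj (U$$(t,p)) * U$$(t,k)) * (\<Sum>s<n. cnj (U$$(s,k)) * U$$(s,q))))"
    by (subst swap3, rule sum.cong[OF refl], simp only: prod_sums)
  also have "\<dots> = (\<Sum>k<n. if k = p \<and> k = q then complex_of_real (a!k) else 0)"
    by (intro sum.cong refl, simp add: U1 p q)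
  also have "\<dots> = (if p = q then complex_of_real (a!p) else 0)" using p by (auto simp: sum.delta)
  finally show ?thesis .
qed

lemma sd_trace: assumes sd: "sd n A U a"
  shows "mtrace A = complex_of_real (\<Sum>p<n. a!p)"
proof -
  have U1: "\<And>p q. p < n \<Longrightarrow> q < n \<Longrightarrow> (\<Sum>t<n. cnj (U$$(t,p)) * U$$(t,q)) = (if p = q then 1 else 0)"
    and UA: "\<And>t s. t < n \<Longrightarrow> s < n \<Longrightarrow> A$$(t,s) = (\<Sum>k<n. U$$(t,k) * complex_of_real (a!k) * cnj (U$$(s,k)))"
    and A: "A \<in> carrier_mat n n"
    using sd unfolding sd_def by auto
  have "mtrace A = (\<Sum>t<n. \<Sum>k<n. complex_of_real (a!k) * (cnj (U$$(t,k)) * U$$(t,k)))"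
    unfolding mtrace_def using A by (intro sum.cong, auto simp: UA mult_ac)
  also have "\<dots> = (\<Sum>k<n. complex_of_real (a!k) * (\<Sum>t<n. cnj (U$$(t,k)) * U$$(t,k)))"
    unfolding sum_distrib_left by (rule sum.swap)
  also have "\<dots> = (\<Sum>k<n. complex_of_real (a!k))" by (intro sum.cong, auto simp: U1)
  finally show ?thesis by simp
qed


lemma ampl1: assumes X: "X \<in> carrier_mat n n" and PX: "\<Phi> X \<in> carrier_mat m m"
  shows "ampl 1 n m \<Phi> X = \<Phi> X"
proof -
  have XX: "mat n n (\<lambda>(r,s). X $$ (0 * n + r, 0 * n + s)) = X" by (rule eq_matI, insert X, auto)
  show ?thesis
  proof (rule eq_matI)
    fix i j assume "i < dim_row (\<Phi> X)" "j < dim_col (\<Phi> X)"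
    hence i: "i < m" and j: "j < m" using PX by auto
    have "ampl 1 n m \<Phi> X $$ (i,j) = \<Phi> (mat n n (\<lambda>(r,s). X $$ ((i div m) * n + r, (j div m) * n + s))) $$ (i mod m, j mod m)"
      unfolding ampl_def using i j by simp
    also have "\<dots> = \<Phi> X $$ (i,j)" using i j XX by simp
    finally show "ampl 1 n m \<Phi> X $$ (i,j) = \<Phi> X $$ (i,j)" .
  qed (insert PX, auto simp: ampl_def)
qed

lemma psd_quad: assumes "psd_mat M" "M \<in> carrier_mat m m" "x \<in> carrier_vec m"
  shows "0 \<le> Re (\<Sum>i<m. \<Sum>j<m. cnj (x $ i) * M $$ (i,j) * x $ j)"
  using assms unfolding psd_mat_def by auto

lemma lin_zero: assumes lin: "linear_map_mat n m \<Phi>"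
  shows "\<Phi> (0\<^sub>m n n) = 0\<^sub>m m m"
proof -
  have c: "\<Phi> (0\<^sub>m n n) \<in> carrier_mat m m" using lin unfolding linear_map_mat_def by auto
  have "\<Phi> (0\<^sub>m n n) = \<Phi> (0 \<cdot>\<^sub>m 0\<^sub>m n n)" by (rule arg_cong[of _ _ \<Phi>], rule eq_matI, auto)
  also have "\<dots> = 0 \<cdot>\<^sub>m \<Phi> (0\<^sub>m n n)" using lin zero_carrier_mat[of n n] unfolding linear_map_mat_def by blast
  also have "\<dots> = 0\<^sub>m m m" using c by (intro eq_matI, auto)
  finally show ?thesis .
qed

lemma lin_sum: fixes k :: nat assumes lin: "linear_map_mat n m \<Phi>"
  and Y: "\<And>p. p < k \<Longrightarrow> Y p \<in> carrier_mat n n" and r: "r < m" and s: "s < m"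
  shows "\<Phi> (mat n n (\<lambda>(t,u). \<Sum>p<k. c p * Y p $$ (t,u))) $$ (r,s) = (\<Sum>p<k. c p * \<Phi> (Y p) $$ (r,s))"
  using Y
proof (induct k)
  case 0
  have z: "mat n n (\<lambda>(t,u). \<Sum>p<0. c p * Y p $$ (t,u)) = 0\<^sub>m n n" by (rule eq_matI, auto)
  show ?case by (subst z, simp add: lin_zero[OF lin] r s)
next
  case (Suc k)
  have Yk: "Y k \<in> carrier_mat n n" using Suc by auto
  let ?S = "mat n n (\<lambda>(t,u). \<Sum>p<k. c p * Y p $$ (t,u))"
  have eq: "mat n n (\<lambda>(t,u). \<Sum>p<Suc k. c p * Y p $$ (t,u)) = ?S + c k \<cdot>\<^sub>m Y k"
    by (rule eq_matI, insert Yk, auto)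
  have S: "?S \<in> carrier_mat n n" by auto
  have cY: "c k \<cdot>\<^sub>m Y k \<in> carrier_mat n n" using Yk by auto
  have "\<Phi> (?S + c k \<cdot>\<^sub>m Y k) = \<Phi> ?S + \<Phi> (c k \<cdot>\<^sub>m Y k)" using lin S cY unfolding linear_map_mat_def by blast
  also have "\<Phi> (c k \<cdot>\<^sub>m Y k) = c k \<cdot>\<^sub>m \<Phi> (Y k)" using lin Yk unfolding linear_map_mat_def by blast
  finally have e2: "\<Phi> (?S + c k \<cdot>\<^sub>m Y k) = \<Phi> ?S + c k \<cdot>\<^sub>m \<Phi> (Y k)" .
  have c1: "\<Phi> ?S \<in> carrier_mat m m" and c2: "\<Phi> (Y k) \<in> carrier_mat m m"
    using lin S Yk unfolding linear_map_mat_def by auto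
  have "\<Phi> (mat n n (\<lambda>(t,u). \<Sum>p<Suc k. c p * Y p $$ (t,u))) $$ (r,s) = \<Phi> ?S $$ (r,s) + c k * \<Phi> (Y k) $$ (r,s)"
    unfolding eq e2 using c1 c2 r s by simp
  also have "\<Phi> ?S $$ (r,s) = (\<Sum>p<k. c p * \<Phi> (Y p) $$ (r,s))" by (rule Suc.hyps, rule Suc.prems, simp)
  finally show ?case by simp
qed

lemma a_to_b:
  assumes sdA: "sd n A U a" and sdB: "sd m B V b"
    and lin: "linear_map_mat n m \<Phi>" and cp: "completely_positive n m \<Phi>" and tp: "trace_preserving n \<Phi>"
    and PA: "\<Phi> A = B"
  shows "\<exists>D. row_stochastic n m D \<and> vec_mat_eq b a D"
proof -
  have A: "A \<in> carrier_mat n n" and U: "U \<in> carrier_mat n n" and la: "length a = n"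
    and U1: "\<And>p q. p < n \<Longrightarrow> q < n \<Longrightarrow> (\<Sum>t<n. cnj (U$$(t,p)) * U$$(t,q)) = (if p = q then 1 else 0)"
    and UA: "\<And>t s. t < n \<Longrightarrow> s < n \<Longrightarrow> A$$(t,s) = (\<Sum>k<n. U$$(t,k) * complex_of_real (a!k) * cnj (U$$(s,k)))"
    using sdA unfolding sd_def by auto
  have B: "B \<in> carrier_mat m m" and V: "V \<in> carrier_mat m m" and lb: "length b = m"
    and V2: "\<And>t s. t < m \<Longrightarrow> s < m \<Longrightarrow> (\<Sum>p<m. V$$(t,p) * cnj (V$$(s,p))) = (if t = s then 1 else 0)"
    using sdB unfolding sd_def by auto
  define Xp where "Xp = (\<lambda>p. mat n n (\<lambda>(t,s). U$$(t,p) * cnj (U$$(s,p))))"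
  define M where "M = (\<lambda>p. \<Phi> (Xp p))"
  have Xc: "\<And>p. Xp p \<in> carrier_mat n n" unfolding Xp_def by auto
  have Mc: "\<And>p. M p \<in> carrier_mat m m" unfolding M_def using lin Xc unfolding linear_map_mat_def by auto
  have Aeq: "A = mat n n (\<lambda>(t,u). \<Sum>p<n. complex_of_real (a!p) * Xp p $$ (t,u))"
    by (rule eq_matI, insert A, auto simp: UA Xp_def mult_ac intro!: sum.cong)
  have Bent: "\<And>r s. r < m \<Longrightarrow> s < m \<Longrightarrow> B $$ (r,s) = (\<Sum>p<n. complex_of_real (a!p) * M p $$ (r,s))"
    unfolding PA[symmetric] M_def by (subst Aeq, rule lin_sum[OF lin Xc])
  have Xpsd: "\<And>p. p < n \<Longrightarrow> psd_mat (Xp p)"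
  proof -
    fix p assume p: "p < n"
    have herm: "hermitian_mat n (Xp p)" unfolding hermitian_mat_def Xp_def by auto
    show "psd_mat (Xp p)" unfolding psd_mat_def
    proof (intro conjI ballI)
      show "hermitian_mat (dim_row (Xp p)) (Xp p)" using herm Xc[of p] by simp
      fix x :: "complex vec" assume "x \<in> carrier_vec (dim_row (Xp p))"
      define w where "w = (\<Sum>i<n. cnj (x $ i) * U$$(i,p))"
      have "(\<Sum>i<dim_row (Xp p). \<Sum>j<dim_row (Xp p). cnj (x $ i) * Xp p $$ (i, j) * x $ j)
          = (\<Sum>i<n. \<Sum>j<n. (cnj (x $ i) * U$$(i,p)) * cnj (cnj (x $ j) * U$$(j,p)))"
        unfolding Xp_def by (auto simp: mult_ac intro!: sum.cong)
      also have "\<dots> = w * cnj w" unfolding w_def cnj_sum sum_product by (rule refl)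
      finally show "0 \<le> Re (\<Sum>i<dim_row (Xp p). \<Sum>j<dim_row (Xp p). cnj (x $ i) * Xp p $$ (i, j) * x $ j)"
        by (simp add: complex_mult_cnj)
    qed
  qed
  have Mpsd: "\<And>p. p < n \<Longrightarrow> psd_mat (M p)"
  proof -
    fix p assume p: "p < n"
    have "psd_mat (ampl 1 n m \<Phi> (Xp p))" using cp Xpsd[OF p] Xc[of p] unfolding completely_positive_def by auto
    thus "psd_mat (M p)" unfolding M_def using ampl1[of "Xp p" n \<Phi> m, OF Xc Mc[of p, unfolded M_def]] by simp
  qed
  define D where "D = mat n m (\<lambda>(p,q). Re (\<Sum>r<m. \<Sum>s<m. cnj (V$$(r,q)) * M p $$ (r,s) * V$$(s,q)))"
  show ?thesis
  proof (intro exI[of _ D] conjI)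
    show "row_stochastic n m D" unfolding row_stochastic_def
    proof (intro conjI allI impI)
      show "D \<in> carrier_mat n m" unfolding D_def by auto
      fix p assume p: "p < n"
      {
        fix q assume q: "q < m"
        have "0 \<le> Re (\<Sum>r<m. \<Sum>s<m. cnj (vec m (\<lambda>i. V$$(i,q)) $ r) * M p $$ (r,s) * vec m (\<lambda>i. V$$(i,q)) $ s)"
          by (rule psd_quad[OF Mpsd[OF p] Mc], auto)
        thus "0 \<le> D $$ (p,q)" unfolding D_def using p q by simp
      }
      have "(\<Sum>q<m. D $$ (p,q)) = Re (\<Sum>q<m. \<Sum>r<m. \<Sum>s<m. cnj (V$$(r,q)) * M p $$ (r,s) * V$$(s,q))"
        unfolding D_def using p by (simp add: Re_sum)
      also have "(\<Sum>q<m. \<Sum>r<m. \<Sum>s<m. cnj (V$$(r,q)) * M p $$ (r,s) * V$$(s,q))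
         = (\<Sum>r<m. \<Sum>s<m. M p $$ (r,s) * (\<Sum>q<m. V$$(s,q) * cnj (V$$(r,q))))"
        by (subst swap3[symmetric], intro sum.cong refl, simp add: sum_distrib_left mult_ac)
      also have "\<dots> = (\<Sum>r<m. M p $$ (r,r))"
        by (intro sum.cong refl, simp add: V2 sum_delta_mult)
      also have "\<dots> = mtrace (M p)" unfolding mtrace_def using Mc[of p] by simp
      also have "\<dots> = mtrace (Xp p)" unfolding M_def using tp Xc unfolding trace_preserving_def by auto
      also have "\<dots> = (\<Sum>t<n. cnj (U$$(t,p)) * U$$(t,p))" unfolding mtrace_def Xp_def
        by (auto simp: mult.commute intro!: sum.cong)
      also have "\<dots> = 1" using U1[OF p p] by simp
      finally show "(\<Sum>q<m. D $$ (p,q)) = 1" by simp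
    qed
    show "vec_mat_eq b a D" unfolding vec_mat_eq_def
    proof (intro allI impI)
      fix q assume "q < length b"
      hence q: "q < m" using lb by auto
      have "complex_of_real (b ! q) = (\<Sum>r<m. \<Sum>s<m. cnj (V$$(r,q)) * B$$(r,s) * V$$(s,q))"
        using sd_diag[OF sdB q q] by simp
      also have "\<dots> = (\<Sum>r<m. \<Sum>s<m. \<Sum>p<n. complex_of_real (a!p) * (cnj (V$$(r,q)) * M p $$ (r,s) * V$$(s,q)))"
        by (intro sum.cong refl, simp add: Bent sum_distrib_left sum_distrib_right mult_ac)
      also have "\<dots> = (\<Sum>p<n. complex_of_real (a!p) * (\<Sum>r<m. \<Sum>s<m. cnj (V$$(r,q)) * M p $$ (r,s) * V$$(s,q)))"
        by (subst swap3, simp add: sum_distrib_left)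
      finally have "b ! q = Re (\<Sum>p<n. complex_of_real (a!p) * (\<Sum>r<m. \<Sum>s<m. cnj (V$$(r,q)) * M p $$ (r,s) * V$$(s,q)))"
        by (metis Re_complex_of_real)
      also have "\<dots> = (\<Sum>p<n. a!p * D $$ (p,q))" unfolding D_def using q by (simp add: Re_sum)
      finally show "b ! q = (\<Sum>p<length a. a ! p * D $$ (p, q))" using la by simp
    qed
  qed
qed


definition fq :: "nat \<Rightarrow> complex mat \<Rightarrow> nat \<Rightarrow> complex mat \<Rightarrow> complex" where
  "fq n U p X = (\<Sum>t<n. \<Sum>s<n. cnj (U$$(t,p)) * X$$(t,s) * U$$(s,p))"

definition mkphi :: "nat \<Rightarrow> nat \<Rightarrow> complex mat \<Rightarrow> complex mat \<Rightarrow> real mat \<Rightarrow> complex mat \<Rightarrow> complex mat" where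
  "mkphi n m U V D X = mat m m (\<lambda>(r,s). \<Sum>p<n. \<Sum>q<m. complex_of_real (D$$(p,q)) * fq n U p X * (V$$(r,q) * cnj (V$$(s,q))))"

lemma fq_add: assumes "X \<in> carrier_mat n n" "Y \<in> carrier_mat n n" shows "fq n U p (X + Y) = fq n U p X + fq n U p Y"
  unfolding fq_def sum.distrib[symmetric] by (intro sum.cong refl, insert assms, auto simp: algebra_simps)

lemma fq_smult: "X \<in> carrier_mat n n \<Longrightarrow> fq n U p (c \<cdot>\<^sub>m X) = c * fq n U p X"
  unfolding fq_def by (simp add: sum_distrib_left mult_ac)

lemma mkphi_linear: "linear_map_mat n m (mkphi n m U V D)"
  unfolding linear_map_mat_def
proof (intro conjI ballI allI)
  fix X :: "complex mat" assume "X \<in> carrier_mat n n"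
  show "mkphi n m U V D X \<in> carrier_mat m m" unfolding mkphi_def by auto
next
  fix X Y :: "complex mat" assume X: "X \<in> carrier_mat n n" and Y: "Y \<in> carrier_mat n n"
  show "mkphi n m U V D (X + Y) = mkphi n m U V D X + mkphi n m U V D Y"
  proof (rule eq_matI)
    fix r s assume "r < dim_row (mkphi n m U V D X + mkphi n m U V D Y)" "s < dim_col (mkphi n m U V D X + mkphi n m U V D Y)"
    hence r: "r < m" and s: "s < m" by (auto simp: mkphi_def)
    have "(mkphi n m U V D X + mkphi n m U V D Y) $$ (r,s) = mkphi n m U V D X $$ (r,s) + mkphi n m U V D Y $$ (r,s)"
      using r s by (simp add: mkphi_def)
    also have "\<dots> = mkphi n m U V D (X + Y) $$ (r,s)"
      unfolding mkphi_def using r s apply simp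
      unfolding sum.distrib[symmetric] by (intro sum.cong refl, simp add: fq_add[OF X Y] algebra_simps)
    finally show "mkphi n m U V D (X + Y) $$ (r,s) = (mkphi n m U V D X + mkphi n m U V D Y) $$ (r,s)" ..
  qed (auto simp: mkphi_def)
next
  fix c and X :: "complex mat" assume X: "X \<in> carrier_mat n n"
  show "mkphi n m U V D (c \<cdot>\<^sub>m X) = c \<cdot>\<^sub>m mkphi n m U V D X"
    by (rule eq_matI, auto simp: mkphi_def fq_smult[OF X] sum_distrib_left mult_ac)
qed

lemma mkphi_tp: assumes sdA: "sd n A U a" and sdB: "sd m B V b" and rs: "row_stochastic n m D"
  shows "trace_preserving n (mkphi n m U V D)"
  unfolding trace_preserving_def
proof
  fix X :: "complex mat" assume X: "X \<in> carrier_mat n n"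
  have U2: "\<And>t s. t < n \<Longrightarrow> s < n \<Longrightarrow> (\<Sum>p<n. U$$(t,p) * cnj (U$$(s,p))) = (if t = s then 1 else 0)"
    using sdA unfolding sd_def by auto
  have V1: "\<And>p q. p < m \<Longrightarrow> q < m \<Longrightarrow> (\<Sum>t<m. cnj (V$$(t,p)) * V$$(t,q)) = (if p = q then 1 else 0)"
    using sdB unfolding sd_def by auto
  have rsum: "\<And>p. p < n \<Longrightarrow> (\<Sum>q<m. D $$ (p,q)) = 1"
    using rs unfolding row_stochastic_def by auto
  have "mtrace (mkphi n m U V D X) = (\<Sum>r<m. \<Sum>p<n. \<Sum>q<m. complex_of_real (D$$(p,q)) * fq n U p X * (V$$(r,q) * cnj (V$$(r,q))))"
    unfolding mtrace_def mkphi_def by simp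
  also have "\<dots> = (\<Sum>p<n. \<Sum>q<m. complex_of_real (D$$(p,q)) * fq n U p X * (\<Sum>r<m. cnj (V$$(r,q)) * V$$(r,q)))"
    by (subst swap3[symmetric], simp add: sum_distrib_left mult_ac)
  also have "\<dots> = (\<Sum>p<n. \<Sum>q<m. fq n U p X * complex_of_real (D$$(p,q)))"
    by (intro sum.cong refl, simp add: V1)
  also have "\<dots> = (\<Sum>p<n. fq n U p X * (\<Sum>q<m. complex_of_real (D$$(p,q))))"
    by (simp add: sum_distrib_left)
  also have "\<dots> = (\<Sum>p<n. fq n U p X)" by (intro sum.cong refl, simp add: of_real_sum[symmetric] rsum)
  also have "\<dots> = (\<Sum>t<n. \<Sum>s<n. X$$(t,s) * (\<Sum>p<n. U$$(s,p) * cnj (U$$(t,p))))"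
    unfolding fq_def by (subst swap3[symmetric], simp add: sum_distrib_left mult_ac)
  also have "\<dots> = (\<Sum>t<n. X$$(t,t))"
    by (intro sum.cong refl, simp add: U2 sum_delta_mult)
  also have "\<dots> = mtrace X" unfolding mtrace_def using X by simp
  finally show "mtrace (mkphi n m U V D X) = mtrace X" .
qed

lemma mkphi_A: assumes sdA: "sd n A U a" and sdB: "sd m B V b" and v: "vec_mat_eq b a D"
  shows "mkphi n m U V D A = B"
proof -
  have B: "B \<in> carrier_mat m m" and lb: "length b = m"
    and VB: "\<And>t s. t < m \<Longrightarrow> s < m \<Longrightarrow> B$$(t,s) = (\<Sum>q<m. V$$(t,q) * complex_of_real (b!q) * cnj (V$$(s,q)))"
    using sdB unfolding sd_def by auto
  have la: "length a = n" using sdA unfolding sd_def by auto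
  have fA: "\<And>p. p < n \<Longrightarrow> fq n U p A = complex_of_real (a!p)"
    unfolding fq_def using sd_diag[OF sdA] by simp
  have bq: "\<And>q. q < m \<Longrightarrow> complex_of_real (b!q) = (\<Sum>p<n. complex_of_real (a!p) * complex_of_real (D$$(p,q)))"
    using v la lb unfolding vec_mat_eq_def by simp
  show ?thesis
  proof (rule eq_matI)
    fix r s assume "r < dim_row B" "s < dim_col B"
    hence r: "r < m" and s: "s < m" using B by auto
    have "mkphi n m U V D A $$ (r,s) = (\<Sum>p<n. \<Sum>q<m. complex_of_real (D$$(p,q)) * complex_of_real (a!p) * (V$$(r,q) * cnj (V$$(s,q))))"
      unfolding mkphi_def using r s by (simp add: fA)
    also have "\<dots> = (\<Sum>q<m. (\<Sum>p<n. complex_of_real (a!p) * complex_of_real (D$$(p,q))) * (V$$(r,q) * cnj (V$$(s,q))))"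
      by (subst sum.swap, simp add: sum_distrib_right sum_distrib_left mult_ac)
    also have "\<dots> = B $$ (r,s)" using VB[OF r s] by (simp add: bq mult_ac)
    finally show "mkphi n m U V D A $$ (r,s) = B $$ (r,s)" .
  qed (insert B, auto simp: mkphi_def)
qed


lemma swap4: "(\<Sum>a\<in>A. \<Sum>b\<in>B. \<Sum>c\<in>C. \<Sum>d\<in>E. f a b c d) = (\<Sum>c\<in>C. \<Sum>d\<in>E. \<Sum>a\<in>A. \<Sum>b\<in>B. f a b c d)"
proof -
  have "(\<Sum>a\<in>A. \<Sum>b\<in>B. \<Sum>c\<in>C. \<Sum>d\<in>E. f a b c d) = (\<Sum>a\<in>A. \<Sum>c\<in>C. \<Sum>d\<in>E. \<Sum>b\<in>B. f a b c d)"
    by (rule sum.cong[OF refl], rule swap3[symmetric])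
  also have "\<dots> = (\<Sum>c\<in>C. \<Sum>d\<in>E. \<Sum>a\<in>A. \<Sum>b\<in>B. f a b c d)" by (rule swap3[symmetric])
  finally show ?thesis .
qed

lemma idx_lt: fixes I k t n :: nat assumes "I < k" "t < n" shows "I*n + t < k*n"
proof -
  have "Suc I * n \<le> k * n" using assms by (intro mult_le_mono1, simp)
  thus ?thesis using assms by simp
qed

definition gq :: "nat \<Rightarrow> complex mat \<Rightarrow> complex mat \<Rightarrow> nat \<Rightarrow> nat \<Rightarrow> nat \<Rightarrow> complex" where
  "gq n U X p I J = (\<Sum>t<n. \<Sum>s<n. cnj (U$$(t,p)) * X$$(I*n+t, J*n+s) * U$$(s,p))"

lemma fq_mat: "fq n U p (mat n n (\<lambda>(r,s). X $$ (I*n+r, J*n+s))) = gq n U X p I J"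
  unfolding fq_def gq_def by (intro sum.cong refl, simp)

lemma ampl_entry: assumes i: "i < k*m" and j: "j < k*m"
  shows "ampl k n m (mkphi n m U V D) X $$ (i,j) = (\<Sum>p<n. \<Sum>q<m. complex_of_real (D$$(p,q)) *
     gq n U X p (i div m) (j div m) * (V$$(i mod m,q) * cnj (V$$(j mod m,q))))"
proof -
  have m: "m > 0" using i by (cases m, auto)
  have "ampl k n m (mkphi n m U V D) X $$ (i,j) = mkphi n m U V D (mat n n (\<lambda>(r,s). X $$ ((i div m) * n + r, (j div m) * n + s))) $$ (i mod m, j mod m)"
    unfolding ampl_def using i j by simp
  also have "\<dots> = (\<Sum>p<n. \<Sum>q<m. complex_of_real (D$$(p,q)) *
     gq n U X p (i div m) (j div m) * (V$$(i mod m,q) * cnj (V$$(j mod m,q))))"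
    unfolding mkphi_def using m by (simp add: fq_mat)
  finally show ?thesis .
qed

lemma gq_cnj: assumes h: "hermitian_mat (k*n) X" and I: "I < k" and J: "J < k"
  shows "gq n U X p J I = cnj (gq n U X p I J)"
proof -
  have hX: "\<And>i j. i < k*n \<Longrightarrow> j < k*n \<Longrightarrow> X $$ (j,i) = cnj (X $$ (i,j))"
    using h unfolding hermitian_mat_def by blast
  have "cnj (gq n U X p I J) = (\<Sum>t<n. \<Sum>s<n. U$$(t,p) * cnj (X$$(I*n+t, J*n+s)) * cnj (U$$(s,p)))"
    unfolding gq_def by (simp add: cnj_sum)
  also have "\<dots> = (\<Sum>t<n. \<Sum>s<n. cnj (U$$(s,p)) * X$$(J*n+s, I*n+t) * U$$(t,p))"
  proof (intro sum.cong refl)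
    fix t s assume t: "t \<in> {..<n}" and s: "s \<in> {..<n}"
    have e: "X$$(J*n+s, I*n+t) = cnj (X$$(I*n+t, J*n+s))"
      by (rule hX[OF idx_lt[OF I] idx_lt[OF J]], insert t s, auto)
    show "U$$(t,p) * cnj (X$$(I*n+t, J*n+s)) * cnj (U$$(s,p)) = cnj (U$$(s,p)) * X$$(J*n+s, I*n+t) * U$$(t,p)"
      unfolding e by (simp add: mult_ac)
  qed
  also have "\<dots> = gq n U X p J I" unfolding gq_def by (rule sum.swap)
  finally show ?thesis by simp
qed

lemma quad_eq: fixes z :: "complex vec" and U V X :: "complex mat" and p q k n m :: nat assumes n: "n > 0" and m: "m > 0"
  defines "y \<equiv> vec (k*n) (\<lambda>l. U$$(l mod n, p) * (\<Sum>s<m. cnj (V$$(s,q)) * z$((l div n)*m + s)))"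
  shows "(\<Sum>i<k*m. \<Sum>j<k*m. cnj (z$i) * gq n U X p (i div m) (j div m) * (V$$(i mod m,q) * cnj (V$$(j mod m,q))) * z$j)
       = (\<Sum>l<k*n. \<Sum>l'<k*n. cnj (y$l) * X$$(l,l') * y$l')"
proof -
  define H where "H = (\<lambda>I J. \<Sum>r<m. \<Sum>s<m. \<Sum>t<n. \<Sum>t'<n. cnj(z$(I*m+r)) * V$$(r,q) * cnj(U$$(t,p)) *
      X$$(I*n+t, J*n+t') * U$$(t',p) * cnj(V$$(s,q)) * z$(J*m+s))"
  have dm: "\<And>I r. r < m \<Longrightarrow> (I*m+r) div m = I \<and> (I*m+r) mod m = r" using m by simp
  have dn: "\<And>I r. r < n \<Longrightarrow> (I*n+r) div n = I \<and> (I*n+r) mod n = r" using n by simp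
  have "(\<Sum>i<k*m. \<Sum>j<k*m. cnj (z$i) * gq n U X p (i div m) (j div m) * (V$$(i mod m,q) * cnj (V$$(j mod m,q))) * z$j)
    = (\<Sum>I<k. \<Sum>r<m. \<Sum>J<k. \<Sum>s<m. cnj (z$(I*m+r)) * gq n U X p I J * (V$$(r,q) * cnj (V$$(s,q))) * z$(J*m+s))"
    unfolding sum_group[of _ k m] by (intro sum.cong refl, simp add: dm)
  also have "\<dots> = (\<Sum>I<k. \<Sum>J<k. \<Sum>r<m. \<Sum>s<m. cnj (z$(I*m+r)) * gq n U X p I J * (V$$(r,q) * cnj (V$$(s,q))) * z$(J*m+s))"
    by (rule sum.cong[OF refl], rule sum.swap)
  also have "\<dots> = (\<Sum>I<k. \<Sum>J<k. H I J)"
    unfolding H_def gq_def by (intro sum.cong refl, simp add: sum_distrib_left sum_distrib_right mult_ac)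
  finally have L: "(\<Sum>i<k*m. \<Sum>j<k*m. cnj (z$i) * gq n U X p (i div m) (j div m) * (V$$(i mod m,q) * cnj (V$$(j mod m,q))) * z$j)
     = (\<Sum>I<k. \<Sum>J<k. H I J)" .
  have yv: "\<And>I t. I < k \<Longrightarrow> t < n \<Longrightarrow> y $ (I*n+t) = U$$(t, p) * (\<Sum>s<m. cnj (V$$(s,q)) * z$(I*m + s))"
    unfolding y_def using dn by (simp add: idx_lt)
  have "(\<Sum>l<k*n. \<Sum>l'<k*n. cnj (y$l) * X$$(l,l') * y$l')
     = (\<Sum>I<k. \<Sum>t<n. \<Sum>J<k. \<Sum>t'<n. cnj (y$(I*n+t)) * X$$(I*n+t,J*n+t') * y$(J*n+t'))"
    unfolding sum_group[of _ k n] by simp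
  also have "\<dots> = (\<Sum>I<k. \<Sum>J<k. \<Sum>t<n. \<Sum>t'<n. cnj (y$(I*n+t)) * X$$(I*n+t,J*n+t') * y$(J*n+t'))"
    by (rule sum.cong[OF refl], rule sum.swap)
  also have "\<dots> = (\<Sum>I<k. \<Sum>J<k. \<Sum>t<n. \<Sum>t'<n. \<Sum>r<m. \<Sum>s<m. cnj(z$(I*m+r)) * V$$(r,q) * cnj(U$$(t,p)) *
      X$$(I*n+t, J*n+t') * U$$(t',p) * cnj(V$$(s,q)) * z$(J*m+s))"
    by (intro sum.cong refl, simp add: yv cnj_sum sum_distrib_left sum_distrib_right mult_ac)
  also have "\<dots> = (\<Sum>I<k. \<Sum>J<k. H I J)" unfolding H_def by (rule sum.cong[OF refl], rule sum.cong[OF refl], rule swap4)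
  finally show ?thesis using L by simp
qed


lemma mkphi_cp: assumes n: "n > 0" and m: "m > 0" and Dn: "\<And>p q. p < n \<Longrightarrow> q < m \<Longrightarrow> 0 \<le> D$$(p,q)"
  shows "completely_positive n m (mkphi n m U V D)"
  unfolding completely_positive_def
proof (intro allI ballI impI)
  fix k and X :: "complex mat" assume X: "X \<in> carrier_mat (k*n) (k*n)" and pX: "psd_mat X"
  let ?G = "ampl k n m (mkphi n m U V D) X"
  have hX: "hermitian_mat (k*n) X" using pX X unfolding psd_mat_def by auto
  have qX: "\<And>y. y \<in> carrier_vec (k*n) \<Longrightarrow> 0 \<le> Re (\<Sum>i<k*n. \<Sum>j<k*n. cnj (y $ i) * X $$ (i,j) * y $ j)"
    using pX X unfolding psd_mat_def by auto
  have G: "?G \<in> carrier_mat (k*m) (k*m)" unfolding ampl_def by auto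
  have dk: "\<And>i. i < k*m \<Longrightarrow> i div m < k" by (rule less_mult_imp_div_less)
  have herm: "hermitian_mat (k*m) ?G" unfolding hermitian_mat_def
  proof (intro conjI allI impI)
    show "?G \<in> carrier_mat (k*m) (k*m)" by (rule G)
    fix i j assume i: "i < k*m" and j: "j < k*m"
    show "?G $$ (j,i) = cnj (?G $$ (i,j))"
      unfolding ampl_entry[OF i j] ampl_entry[OF j i]
      by (simp add: cnj_sum gq_cnj[OF hX dk[OF i] dk[OF j]] mult_ac)
  qed
  show "psd_mat ?G" unfolding psd_mat_def
  proof (intro conjI ballI)
    show "hermitian_mat (dim_row ?G) ?G" using herm G by simp
    fix z :: "complex vec" assume "z \<in> carrier_vec (dim_row ?G)"
    define Q where "Q = (\<lambda>p q. \<Sum>i<k*m. \<Sum>j<k*m. cnj (z$i) * gq n U X p (i div m) (j div m) * (V$$(i mod m,q) * cnj (V$$(j mod m,q))) * z$j)"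
    have "(\<Sum>i<dim_row ?G. \<Sum>j<dim_row ?G. cnj (z $ i) * ?G $$ (i,j) * z $ j)
       = (\<Sum>i<k*m. \<Sum>j<k*m. \<Sum>p<n. \<Sum>q<m. complex_of_real (D$$(p,q)) * (cnj (z$i) * gq n U X p (i div m) (j div m) * (V$$(i mod m,q) * cnj (V$$(j mod m,q))) * z$j))"
      using G apply simp
      by (rule sum.cong[OF refl], rule sum.cong[OF refl], simp add: ampl_entry sum_distrib_left sum_distrib_right mult_ac)
    also have "\<dots> = (\<Sum>p<n. \<Sum>q<m. complex_of_real (D$$(p,q)) * Q p q)"
      unfolding Q_def by (subst swap4, simp add: sum_distrib_left)
    finally have eq: "(\<Sum>i<dim_row ?G. \<Sum>j<dim_row ?G. cnj (z $ i) * ?G $$ (i,j) * z $ j) = (\<Sum>p<n. \<Sum>q<m. complex_of_real (D$$(p,q)) * Q p q)" .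
    have Qn: "\<And>p q. 0 \<le> Re (Q p q)"
    proof -
      fix p q
      define y where "y = vec (k*n) (\<lambda>l. U$$(l mod n, p) * (\<Sum>s<m. cnj (V$$(s,q)) * z$((l div n)*m + s)))"
      have "Q p q = (\<Sum>l<k*n. \<Sum>l'<k*n. cnj (y$l) * X$$(l,l') * y$l')"
        unfolding Q_def y_def by (rule quad_eq[OF n m])
      moreover have "y \<in> carrier_vec (k*n)" unfolding y_def by simp
      ultimately show "0 \<le> Re (Q p q)" using qX by simp
    qed
    show "0 \<le> Re (\<Sum>i<dim_row ?G. \<Sum>j<dim_row ?G. cnj (z $ i) * ?G $$ (i,j) * z $ j)"
      unfolding eq by (simp add: Re_sum, intro sum_nonneg mult_nonneg_nonneg, auto simp: Dn Qn)
  qed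
qed




lemma abs_pos: "sum_list (map abs xs) = 2 * sum_list (filter (\<lambda>x. x > 0) xs) - sum_list (xs::real list)"
  by (induct xs) auto

lemma neg_pos: "sum_list (filter (\<lambda>x. x < 0) xs) = sum_list xs - sum_list (filter (\<lambda>x. x > 0) (xs::real list))"
  by (induct xs) auto

theorem theorem3p3:
  fixes n m :: nat and A B :: "complex mat" and a b :: "real list"
  assumes "n \<ge> 1" and "m \<ge> 1"
    and "hermitian_mat n A" and "hermitian_mat m B"
    and "length a = n" and "length b = m"
    and "has_eigenvalues A a" and "has_eigenvalues B b"
  shows
    "((\<exists>\<Phi>. linear_map_mat n m \<Phi> \<and> completely_positive n m \<Phi> \<and> trace_preserving n \<Phi> \<and> \<Phi> A = B)
        \<longleftrightarrow> (\<exists>D. row_stochastic n m D \<and> vec_mat_eq b a D))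
   \<and> ((\<exists>D. row_stochastic n m D \<and> vec_mat_eq b a D)
        \<longleftrightarrow> (mtrace A = mtrace B \<and> sum_list (map abs a) \<ge> sum_list (map abs b)))
   \<and> ((\<exists>D. row_stochastic n m D \<and> vec_mat_eq b a D) \<longrightarrow>
        (\<exists>D. row_stochastic n m D \<and> vec_mat_eq b a D
           \<and> (\<forall>p<n. \<forall>q<n. a ! p * a ! q > 0 \<longrightarrow> row D p = row D q)
           \<and> (\<forall>p<n. a ! p = 0 \<longrightarrow>
                (\<forall>r \<in> carrier_vec m. (\<forall>j<m. 0 \<le> r $ j) \<and> (\<Sum>j<m. r $ j) = 1 \<longrightarrow>
                   vec_mat_eq b a (mat n m (\<lambda>(i,j). if i = p then r $ j else D $$ (i,j)))))))
   \<and> ((mtrace A = mtrace B \<and> sum_list (map abs a) \<ge> sum_list (map abs b))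
        \<longleftrightarrow> (mtrace A = mtrace B \<and>
             sum_list (filter (\<lambda>x. x > 0) a) \<ge> sum_list (filter (\<lambda>x. x > 0) b)))
   \<and> ((mtrace A = mtrace B \<and> sum_list (map abs a) \<ge> sum_list (map abs b))
        \<longleftrightarrow> (mtrace A = mtrace B \<and>
             sum_list (filter (\<lambda>x. x < 0) a) \<le> sum_list (filter (\<lambda>x. x < 0) b)))"
proof -
  note n = assms(1) and m = assms(2) and la = assms(5) and lb = assms(6)
  obtain U where sdA: "sd n A U a" using sd_exists[OF assms(3) assms(7) la] by blast
  obtain V where sdB: "sd m B V b" using sd_exists[OF assms(4) assms(8) lb] by blast
  have trA: "mtrace A = complex_of_real (sum_list a)" using sd_trace[OF sdA] la by (simp add: sum_list_idx')
  have trB: "mtrace B = complex_of_real (sum_list b)" using sd_trace[OF sdB] lb by (simp add: sum_list_idx')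
  have treq: "(mtrace A = mtrace B) = (sum_list a = sum_list b)" unfolding trA trB by simp
  define Pa where "Pa = (\<exists>\<Phi>. linear_map_mat n m \<Phi> \<and> completely_positive n m \<Phi> \<and> trace_preserving n \<Phi> \<and> \<Phi> A = B)"
  define Pb where "Pb = (\<exists>D. row_stochastic n m D \<and> vec_mat_eq b a D)"
  define Pc where "Pc = (mtrace A = mtrace B \<and> sum_list (map abs a) \<ge> sum_list (map abs b))"
  have ab: "Pa \<Longrightarrow> Pb" unfolding Pa_def Pb_def using a_to_b[OF sdA sdB] by blast
  have ba: "Pb \<Longrightarrow> Pa"
  proof -
    assume Pb
    then obtain D where rs: "row_stochastic n m D" and v: "vec_mat_eq b a D" unfolding Pb_def by blast
    have Dn: "\<And>p q. p < n \<Longrightarrow> q < m \<Longrightarrow> 0 \<le> D$$(p,q)" using rs unfolding row_stochastic_def by auto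
    show Pa unfolding Pa_def
      using mkphi_linear[of n m U V D] mkphi_cp[of n m D U V] Dn n m mkphi_tp[OF sdA sdB rs] mkphi_A[OF sdA sdB v]
      by auto
  qed
  have bc: "Pb \<Longrightarrow> Pc" unfolding Pb_def Pc_def treq using b_to_c la lb by metis
  have cb: "Pc \<Longrightarrow> \<exists>D. row_stochastic n m D \<and> vec_mat_eq b a D \<and> (\<forall>p<n. \<forall>q<n. a ! p * a ! q > 0 \<longrightarrow> row D p = row D q)"
    unfolding Pc_def treq by (intro c_to_b[OF la lb m], auto)
  have mo: "Pb \<Longrightarrow> (\<exists>D. row_stochastic n m D \<and> vec_mat_eq b a D
           \<and> (\<forall>p<n. \<forall>q<n. a ! p * a ! q > 0 \<longrightarrow> row D p = row D q)
           \<and> (\<forall>p<n. a ! p = 0 \<longrightarrow>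
                (\<forall>r \<in> carrier_vec m. (\<forall>j<m. 0 \<le> r $ j) \<and> (\<Sum>j<m. r $ j) = 1 \<longrightarrow>
                   vec_mat_eq b a (mat n m (\<lambda>(i,j). if i = p then r $ j else D $$ (i,j))))))"
  proof -
    assume Pb
    then obtain D where D: "row_stochastic n m D" "vec_mat_eq b a D" "\<forall>p<n. \<forall>q<n. a ! p * a ! q > 0 \<longrightarrow> row D p = row D q"
      using cb bc by blast
    show ?thesis
      by (rule exI[of _ D], insert D replace_row[OF D(2) la _ lb], auto)
  qed
  have p4: "Pc = (mtrace A = mtrace B \<and> sum_list (filter (\<lambda>x. x > 0) a) \<ge> sum_list (filter (\<lambda>x. x > 0) b))"
    unfolding Pc_def treq abs_pos[of a] abs_pos[of b] by auto
  have p5: "Pc = (mtrace A = mtrace B \<and> sum_list (filter (\<lambda>x. x < 0) a) \<le> sum_list (filter (\<lambda>x. x < 0) b))"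
    unfolding Pc_def treq abs_pos[of a] abs_pos[of b] neg_pos[of a] neg_pos[of b] by auto
  have cb': "Pc \<Longrightarrow> Pb" unfolding Pb_def using cb by blast
  show ?thesis unfolding Pa_def[symmetric] Pb_def[symmetric] Pc_def[symmetric]
  proof (intro conjI)
    show "Pa = Pb" using ab ba by blast
    show "Pb = Pc" using bc cb' by blast
  qed (use mo p4 p5 in blast)+
qed


end
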